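(* The chain theory of the binary tree with equal-level relation and MSO on tree levels is undecidable.
   Context: The binary tree with equal-level relation is the structure $(\{0,1\}^*,S_0,S_1,\preceq,E)$ (equivalently the weak tree iteration of $(\{0,1\},\{0\},\{1\})$ with equal-level relation), where $S_0=\{(u,u0)\}$, $S_1=\{(u,u1)\}$, $u\preceq v$ iff $u$ is a prefix of $v$, and $E(u,v)$ iff $|u|=|v|$. A path is a maximal $\preceq$-linearly ordered subset of $\{0,1\}^*$, and a chain is a subset of a path. Chain logic is monadic second-order logic in which set quantifiers range only over chains. "With MSO on tree levels" means that in addition monadic second-order quantification is allowed over arbitrary subsets of a single tree level, i.e. over subsets of $\{w\in\{0,1\}^*\mid |w|=|u|\}$ for a given node $u$ (together with first-order quantification over such a level). The chain theory with MSO on tree levels is the set of sentences of this logic true in the binary tree with $E$. *)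

theory Defs
  imports Main "HOL-Library.Sublist" "HOL-Library.Nat_Bijection"
begin

text \<open>Nodes of the binary tree are words over {0,1}, represented as bool lists
  (False = 0, True = 1).\<close>

type_synonym node = "bool list"

definition S0 :: "node \<Rightarrow> node \<Rightarrow> bool" where
  "S0 u v \<longleftrightarrow> v = u @ [False]"

definition S1 :: "node \<Rightarrow> node \<Rightarrow> bool" where
  "S1 u v \<longleftrightarrow> v = u @ [True]"

definition tree_le :: "node \<Rightarrow> node \<Rightarrow> bool" where
  "tree_le u v \<longleftrightarrow> prefix u v"

definition eq_level :: "node \<Rightarrow> node \<Rightarrow> bool" where
  "eq_level u v \<longleftrightarrow> length u = length v"

definition lin_ordered :: "node set \<Rightarrow> bool" where
  "lin_ordered P \<longleftrightarrow> (\<forall>u\<in>P. \<forall>v\<in>P. tree_le u v \<or> tree_le v u)"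

definition is_path :: "node set \<Rightarrow> bool" where
  "is_path P \<longleftrightarrow> lin_ordered P \<and> (\<forall>Q. lin_ordered Q \<and> P \<subseteq> Q \<longrightarrow> Q = P)"

definition is_chain :: "node set \<Rightarrow> bool" where
  "is_chain C \<longleftrightarrow> (\<exists>P. is_path P \<and> C \<subseteq> P)"

definition level :: "node \<Rightarrow> node set" where
  "level u = {w. length w = length u}"

text \<open>ExChain quantifies over chains; ExLevel X x quantifies X over arbitrary subsets of
  the tree level of the node x.  (First-order quantification restricted to a level is
  expressible with ExN and EqLevel.)\<close>

datatype form =
    FS0 nat nat
  | FS1 nat nat
  | FLe nat nat
  | FEqLevel nat nat
  | FEq nat nat
  | FMem nat nat
  | FNeg form
  | FOr form form
  | FExN nat form
  | FExChain nat form
  | FExLevel nat nat form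

fun sat :: "(nat \<Rightarrow> node) \<Rightarrow> (nat \<Rightarrow> node set) \<Rightarrow> form \<Rightarrow> bool" where
  "sat \<nu> \<sigma> (FS0 x y) = S0 (\<nu> x) (\<nu> y)"
| "sat \<nu> \<sigma> (FS1 x y) = S1 (\<nu> x) (\<nu> y)"
| "sat \<nu> \<sigma> (FLe x y) = tree_le (\<nu> x) (\<nu> y)"
| "sat \<nu> \<sigma> (FEqLevel x y) = eq_level (\<nu> x) (\<nu> y)"
| "sat \<nu> \<sigma> (FEq x y) = (\<nu> x = \<nu> y)"
| "sat \<nu> \<sigma> (FMem x X) = (\<nu> x \<in> \<sigma> X)"
| "sat \<nu> \<sigma> (FNeg \<phi>) = (\<not> sat \<nu> \<sigma> \<phi>)"
| "sat \<nu> \<sigma> (FOr \<phi> \<psi>) = (sat \<nu> \<sigma> \<phi> \<or> sat \<nu> \<sigma> \<psi>)"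
| "sat \<nu> \<sigma> (FExN x \<phi>) = (\<exists>u. sat (\<nu>(x := u)) \<sigma> \<phi>)"
| "sat \<nu> \<sigma> (FExChain X \<phi>) = (\<exists>C. is_chain C \<and> sat \<nu> (\<sigma>(X := C)) \<phi>)"
| "sat \<nu> \<sigma> (FExLevel X x \<phi>) = (\<exists>S. S \<subseteq> level (\<nu> x) \<and> sat \<nu> (\<sigma>(X := S)) \<phi>)"

fun fvN :: "form \<Rightarrow> nat set" where
  "fvN (FS0 x y) = {x, y}"
| "fvN (FS1 x y) = {x, y}"
| "fvN (FLe x y) = {x, y}"
| "fvN (FEqLevel x y) = {x, y}"
| "fvN (FEq x y) = {x, y}"
| "fvN (FMem x X) = {x}"
| "fvN (FNeg \<phi>) = fvN \<phi>"
| "fvN (FOr \<phi> \<psi>) = fvN \<phi> \<union> fvN \<psi>"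
| "fvN (FExN x \<phi>) = fvN \<phi> - {x}"
| "fvN (FExChain X \<phi>) = fvN \<phi>"
| "fvN (FExLevel X x \<phi>) = insert x (fvN \<phi>)"

fun fvS :: "form \<Rightarrow> nat set" where
  "fvS (FMem x X) = {X}"
| "fvS (FNeg \<phi>) = fvS \<phi>"
| "fvS (FOr \<phi> \<psi>) = fvS \<phi> \<union> fvS \<psi>"
| "fvS (FExN x \<phi>) = fvS \<phi>"
| "fvS (FExChain X \<phi>) = fvS \<phi> - {X}"
| "fvS (FExLevel X x \<phi>) = fvS \<phi> - {X}"
| "fvS _ = {}"

definition sentence :: "form \<Rightarrow> bool" where
  "sentence \<phi> \<longleftrightarrow> fvN \<phi> = {} \<and> fvS \<phi> = {}"

definition chain_theory :: "form set" where
  "chain_theory = {\<phi>. sentence \<phi> \<and> (\<forall>\<nu> \<sigma>. sat \<nu> \<sigma> \<phi>)}"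

fun code :: "form \<Rightarrow> nat" where
  "code (FS0 x y) = prod_encode (0, prod_encode (x, y))"
| "code (FS1 x y) = prod_encode (1, prod_encode (x, y))"
| "code (FLe x y) = prod_encode (2, prod_encode (x, y))"
| "code (FEqLevel x y) = prod_encode (3, prod_encode (x, y))"
| "code (FEq x y) = prod_encode (4, prod_encode (x, y))"
| "code (FMem x X) = prod_encode (5, prod_encode (x, X))"
| "code (FNeg \<phi>) = prod_encode (6, code \<phi>)"
| "code (FOr \<phi> \<psi>) = prod_encode (7, prod_encode (code \<phi>, code \<psi>))"
| "code (FExN x \<phi>) = prod_encode (8, prod_encode (x, code \<phi>))"
| "code (FExChain X \<phi>) = prod_encode (9, prod_encode (X, code \<phi>))"
| "code (FExLevel X x \<phi>) = prod_encode (10, prod_encode (X, prod_encode (x, code \<phi>)))"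

datatype recf =
    RZ
  | RS
  | RProj nat
  | RComp recf "recf list"
  | RPrim recf recf
  | RMn recf

inductive reval :: "recf \<Rightarrow> nat list \<Rightarrow> nat \<Rightarrow> bool" where
  zero: "reval RZ xs 0"
| succ: "reval RS (x # xs) (Suc x)"
| proj: "i < length xs \<Longrightarrow> reval (RProj i) xs (xs ! i)"
| comp: "list_all2 (\<lambda>g y. reval g xs y) gs ys \<Longrightarrow> reval f ys z \<Longrightarrow> reval (RComp f gs) xs z"
| prim0: "reval f xs z \<Longrightarrow> reval (RPrim f g) (0 # xs) z"
| primS: "reval (RPrim f g) (n # xs) y \<Longrightarrow> reval g (y # n # xs) z
          \<Longrightarrow> reval (RPrim f g) (Suc n # xs) z"
| mn: "reval f (n # xs) 0 \<Longrightarrow> (\<forall>m<n. \<exists>k. k \<noteq> 0 \<and> reval f (m # xs) k)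
          \<Longrightarrow> reval (RMn f) xs n"

definition decidable_set :: "nat set \<Rightarrow> bool" where
  "decidable_set A \<longleftrightarrow> (\<exists>f. \<forall>n. reval f [n] (if n \<in> A then 1 else 0))"

end

theory Submission imports Defs begin

lemma code_inj: "code \<phi> = code \<psi> \<Longrightarrow> \<phi> = \<psi>"
  apply (induction \<phi> arbitrary: \<psi>)
  apply (case_tac \<psi>; simp only: code.simps prod_encode_eq prod.inject form.inject; simp; blast)+
  done

inductive_cases RZE: "reval RZ xs y"
inductive_cases RSE: "reval RS xs y"
inductive_cases RProjE: "reval (RProj i) xs y"
inductive_cases RCompE: "reval (RComp f gs) xs y"
inductive_cases RPrimE: "reval (RPrim f g) xs y"
inductive_cases RMnE: "reval (RMn f) xs y"

lemma list_det: "list_all2 (\<lambda>g y. P g y \<and> (\<forall>y'. P g y' \<longrightarrow> y = y')) gs ys \<Longrightarrow> list_all2 P gs ys' \<Longrightarrow> ys = ys'"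
proof (induction gs arbitrary: ys ys')
  case Nil then show ?case by simp
next
  case (Cons g gs)
  then show ?case by (cases ys; cases ys'; simp)
qed

lemma reval_det: "reval f xs y \<Longrightarrow> reval f xs y' \<Longrightarrow> y = y'"
proof (induction arbitrary: y' rule: reval.induct)
  case (zero xs) then show ?case by (auto elim: RZE)
next
  case (succ x xs) then show ?case by (auto elim: RSE)
next
  case (proj i xs) then show ?case by (auto elim: RProjE)
next
  case (comp xs gs ys f z)
  from comp.prems obtain ys' where a: "list_all2 (\<lambda>g y. reval g xs y) gs ys'" "reval f ys' y'"
    by (rule RCompE)
  have "ys = ys'" using list_det[OF comp(1) a(1)] .
  with a(2) have "reval f ys y'" by simp
  then show ?case using comp.IH by blast
 next
  case (prim0 f xs z) from prim0.prems show ?case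
    by (rule RPrimE) (use prim0.IH in auto)
next
  case (primS f g n xs y z) from primS.prems show ?case
    by (rule RPrimE) (use primS.IH in auto)
next
  case (mn f n xs)
  from mn.prems have b: "reval f (y' # xs) 0" "\<forall>m<y'. \<exists>k. k \<noteq> 0 \<and> reval f (m # xs) k"
    by (rule RMnE, auto)+
  show ?case
  proof (rule ccontr)
    assume "n \<noteq> y'"
    then consider "n < y'" | "y' < n" by linarith
    then show False
    proof cases
      case 1 then obtain k where "k \<noteq> 0" "reval f (n # xs) k" using b by blast
      then show False using mn.IH(1) by blast
    next
      case 2 then obtain k where "k \<noteq> 0" "reval f (y' # xs) k" "\<forall>y''. reval f (y' # xs) y'' \<longrightarrow> k = y''" using mn.IH(2) by blast
      then show False using b by blast
    qed
  qed
qed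

lemma reval_comp2: "reval g1 xs a \<Longrightarrow> reval g2 xs b \<Longrightarrow> reval f [a,b] z \<Longrightarrow> reval (RComp f [g1,g2]) xs z"
  by (rule reval.comp[of _ _ "[a,b]"]) auto

lemma reval_comp1: "reval g1 xs a \<Longrightarrow> reval f [a] z \<Longrightarrow> reval (RComp f [g1]) xs z"
  by (rule reval.comp[of _ _ "[a]"]) auto

lemma reval_proj0: "reval (RProj 0) (x # xs) x"
  using reval.proj[of 0 "x # xs"] by simp
lemma reval_proj1: "reval (RProj (Suc 0)) (x # y # xs) y"
  using reval.proj[of 1 "x # y # xs"] by simp

primrec cst :: "nat \<Rightarrow> recf" where
  "cst 0 = RZ"
| "cst (Suc k) = RComp RS [cst k]"

lemma reval_cst: "reval (cst k) xs k"
  by (induction k) (auto intro: reval.intros reval_comp1)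

definition "radd = RPrim (RProj 0) (RComp RS [RProj 0])"

lemma reval_radd: "reval radd [a,b] (a+b)"
  unfolding radd_def
proof (induction a)
  case 0 show ?case using reval.prim0[OF reval.proj[of 0 "[b]"]] by simp
next
  case (Suc a)
  have "reval (RComp RS [RProj 0]) [a+b,a,b] (Suc (a+b))"
    by (rule reval_comp1[OF reval.proj]) (auto intro: reval.intros)
  then show ?case using reval.primS[OF Suc] by simp
qed

definition "rtri = RPrim RZ (RComp radd [RProj 0, RComp RS [RProj 1]])"

lemma reval_rtri: "reval rtri [n] (triangle n)"
  unfolding rtri_def
proof (induction n)
  case 0 show ?case using reval.prim0[OF reval.zero[of "[]"]] by simp
next
  case (Suc n)
  have "reval (RComp radd [RProj 0, RComp RS [RProj 1]]) [triangle n, n] (triangle n + Suc n)"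
  proof (rule reval_comp2[OF reval_proj0 _ reval_radd[of _ "Suc n"]])
    show "reval (RComp RS [RProj 1]) [triangle n, n] (Suc n)"
      by (rule reval_comp1[OF _ reval.succ[of n "[]"]]) (use reval_proj1 in simp)
  qed
  then show ?case using reval.primS[OF Suc] by simp
qed

definition "rpe = RComp radd [RComp rtri [RComp radd [RProj 0, RProj 1]], RProj 0]"

lemma reval_rpe: "reval rpe [a,b] (prod_encode (a,b))"
  unfolding rpe_def prod_encode_def
  by (auto intro!: reval_comp2[OF _ _ reval_radd] reval_comp1[OF _ reval_rtri]
      reval_comp2[OF reval_proj0 _ reval_radd] reval_proj0 reval_proj1)

definition pl :: "nat \<Rightarrow> recf \<Rightarrow> recf" where "pl k F = RComp rpe [cst k, F]"

lemma reval_pl: "reval F xs v \<Longrightarrow> reval (pl k F) xs (prod_encode (k, v))"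
  unfolding pl_def by (rule reval_comp2[OF reval_cst _ reval_rpe])

fun hrec :: "form \<Rightarrow> recf" where
  "hrec (FMem x X) = (if x = 0 \<and> X = 0 then RProj 0 else if x = 0 \<and> X = 1 then RProj 1 else cst (code (FMem x X)))"
| "hrec (FNeg \<phi>) = pl 6 (hrec \<phi>)"
| "hrec (FOr \<phi> \<psi>) = pl 7 (RComp rpe [hrec \<phi>, hrec \<psi>])"
| "hrec (FExN x \<phi>) = pl 8 (pl x (hrec \<phi>))"
| "hrec (FExChain X \<phi>) = pl 9 (pl X (hrec \<phi>))"
| "hrec (FExLevel X x \<phi>) = pl 10 (pl X (pl x (hrec \<phi>)))"
| "hrec \<phi> = cst (code \<phi>)"

fun hcode :: "nat \<Rightarrow> nat \<Rightarrow> form \<Rightarrow> nat" where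
  "hcode c0 c1 (FMem x X) = (if x = 0 \<and> X = 0 then c0 else if x = 0 \<and> X = 1 then c1 else code (FMem x X))"
| "hcode c0 c1 (FNeg \<phi>) = prod_encode (6, hcode c0 c1 \<phi>)"
| "hcode c0 c1 (FOr \<phi> \<psi>) = prod_encode (7, prod_encode (hcode c0 c1 \<phi>, hcode c0 c1 \<psi>))"
| "hcode c0 c1 (FExN x \<phi>) = prod_encode (8, prod_encode (x, hcode c0 c1 \<phi>))"
| "hcode c0 c1 (FExChain X \<phi>) = prod_encode (9, prod_encode (X, hcode c0 c1 \<phi>))"
| "hcode c0 c1 (FExLevel X x \<phi>) = prod_encode (10, prod_encode (X, prod_encode (x, hcode c0 c1 \<phi>)))"
| "hcode c0 c1 \<phi> = code \<phi>"

lemma reval_hrec: "reval (hrec \<phi>) [c0, c1] (hcode c0 c1 \<phi>)"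
proof (induction \<phi>)
  case (FOr \<phi>1 \<phi>2) then show ?case
    by (auto intro!: reval_pl reval_comp2[OF _ _ reval_rpe])
qed (auto intro!: reval_pl reval_cst reval_proj0 reval_proj1)

abbreviation "FAnd a b \<equiv> FNeg (FOr (FNeg a) (FNeg b))"
abbreviation "FImp a b \<equiv> FOr (FNeg a) b"
abbreviation "FAll x a \<equiv> FNeg (FExN x (FNeg a))"
abbreviation "FFalse \<equiv> FExN 0 (FNeg (FEq 0 0))"

primrec Nm :: "nat \<Rightarrow> form" where
  "Nm 0 = FAll 1 (FLe 0 1)"
| "Nm (Suc n) = FExN 1 (FAnd (FOr (FS0 1 0) (FS1 1 0)) (FExN 0 (FAnd (FEq 0 1) (Nm n))))"

lemma sat_Nm: "sat \<nu> \<sigma> (Nm n) \<longleftrightarrow> length (\<nu> 0) = n"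
proof (induction n arbitrary: \<nu>)
  case 0
  have "(\<forall>u. prefix (\<nu> 0) u) \<longleftrightarrow> \<nu> 0 = []"
    by (metis Nil_prefix prefix_Nil)
  then show ?case by (simp add: tree_le_def)
next
  case (Suc n)
  have "sat \<nu> \<sigma> (Nm (Suc n)) \<longleftrightarrow> (\<exists>p. (\<nu> 0 = p @ [False] \<or> \<nu> 0 = p @ [True]) \<and> length p = n)"
    using Suc.IH by (simp add: S0_def S1_def)
  also have "\<dots> \<longleftrightarrow> length (\<nu> 0) = Suc n"
  proof
    assume "length (\<nu> 0) = Suc n"
    then obtain p b where "\<nu> 0 = p @ [b]" "length p = n"
      by (metis length_Suc_conv_rev)
    then show "\<exists>p. (\<nu> 0 = p @ [False] \<or> \<nu> 0 = p @ [True]) \<and> length p = n"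
      by (cases b) auto
  qed auto
  finally show ?case .
qed

definition "Thole = FExN 1 (FAnd (FOr (FS0 1 0) (FS1 1 0)) (FExN 0 (FAnd (FEq 0 1) (FMem 0 0))))"
definition "rnc = RPrim (cst (code (Nm 0))) (hrec Thole)"

lemma reval_rnc: "reval rnc [n] (code (Nm n))"
  unfolding rnc_def
proof (induction n)
  case 0 show ?case using reval.prim0[OF reval_cst] by simp
next
  case (Suc n)
  have "reval (hrec Thole) [code (Nm n), n] (code (Nm (Suc n)))"
    using reval_hrec[of Thole "code (Nm n)" n] by (simp add: Thole_def)
  then show ?case using reval.primS[OF Suc] by simp
qed

definition "Dhole = FExN 0 (FAnd (FMem 0 0) (FMem 0 1))"
definition "rdiag = RComp (hrec Dhole) [RComp rnc [RProj 0], RProj 0]"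
definition "dg \<psi> = FExN 0 (FAnd (Nm (code \<psi>)) \<psi>)"

lemma reval_rdiag: "reval rdiag [code \<psi>] (code (dg \<psi>))"
proof -
  have "reval rdiag [code \<psi>] (hcode (code (Nm (code \<psi>))) (code \<psi>) Dhole)"
    unfolding rdiag_def
    by (rule reval_comp2[OF reval_comp1[OF reval_proj0 reval_rnc] reval_proj0 reval_hrec])
  then show ?thesis by (simp add: Dhole_def dg_def)
qed

definition "IsZ a c = FAll c (FLe a c)"
definition "SucF a y c = FExN c (FAnd (FEqLevel c a) (FOr (FS0 c y) (FS1 c y)))"
definition "Lt a b c = FExN c (FAnd (FLe c b) (FAnd (FEqLevel c a) (FNeg (FEq c b))))"
definition "Bit u k c = FExN c (FExN (Suc c) (FAnd (FLe (Suc c) u) (FAnd (FS1 c (Suc c)) (FEqLevel c k))))"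
definition "Only u a b c = FAll c (FAll (Suc c) (FImp (FAnd (FLe (Suc c) u) (FS1 c (Suc c))) (FOr (FEqLevel c a) (FEqLevel c b))))"
definition "PairN u a b c = FAnd (Bit u a c) (FAnd (Bit u b c) (Only u a b c))"
definition "Rel a b c = FExN c (FAnd (FOr (FAnd (FNeg (Lt b a (Suc c))) (FMem c 0)) (FAnd (Lt b a (Suc c)) (FMem c 1))) (PairN c a b (Suc c)))"

definition tpos :: "bool list \<Rightarrow> nat set" where "tpos w = {i. i < length w \<and> w ! i}"

lemma sat_IsZ: "a < c \<Longrightarrow> sat \<nu> \<sigma> (IsZ a c) \<longleftrightarrow> length (\<nu> a) = 0"
  by (simp add: IsZ_def tree_le_def) (metis Nil_prefix prefix_Nil)

lemma sat_SucF: "a < c \<Longrightarrow> y < c \<Longrightarrow> sat \<nu> \<sigma> (SucF a y c) \<longleftrightarrow> length (\<nu> y) = Suc (length (\<nu> a))"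
proof -
  assume "a < c" "y < c"
  then have "sat \<nu> \<sigma> (SucF a y c) \<longleftrightarrow> (\<exists>p. length p = length (\<nu> a) \<and> (\<nu> y = p @ [False] \<or> \<nu> y = p @ [True]))"
    by (auto simp: SucF_def S0_def S1_def eq_level_def)
  also have "\<dots> \<longleftrightarrow> length (\<nu> y) = Suc (length (\<nu> a))"
  proof
    assume "length (\<nu> y) = Suc (length (\<nu> a))"
    then obtain p b where "\<nu> y = p @ [b]" "length p = length (\<nu> a)"
      by (metis length_Suc_conv_rev)
    then show "\<exists>p. length p = length (\<nu> a) \<and> (\<nu> y = p @ [False] \<or> \<nu> y = p @ [True])"
      by (cases b) auto
  qed auto
  finally show ?thesis .
qed

lemma sat_Lt: "a < c \<Longrightarrow> b < c \<Longrightarrow> sat \<nu> \<sigma> (Lt a b c) \<longleftrightarrow> length (\<nu> a) < length (\<nu> b)"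
proof -
  assume "a < c" "b < c"
  then have "sat \<nu> \<sigma> (Lt a b c) \<longleftrightarrow> (\<exists>p. prefix p (\<nu> b) \<and> length p = length (\<nu> a) \<and> p \<noteq> \<nu> b)"
    by (auto simp: Lt_def tree_le_def eq_level_def)
  also have "\<dots> \<longleftrightarrow> length (\<nu> a) < length (\<nu> b)"
  proof
    assume "length (\<nu> a) < length (\<nu> b)"
    then show "\<exists>p. prefix p (\<nu> b) \<and> length p = length (\<nu> a) \<and> p \<noteq> \<nu> b"
      by (intro exI[of _ "take (length (\<nu> a)) (\<nu> b)"]) (auto simp: take_is_prefix)
  next
    assume "\<exists>p. prefix p (\<nu> b) \<and> length p = length (\<nu> a) \<and> p \<noteq> \<nu> b"
    then show "length (\<nu> a) < length (\<nu> b)"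
      by (metis prefix_length_less strict_prefix_def)
  qed
  finally show ?thesis .
qed

lemma bit_char: "(\<exists>p. length p = k \<and> prefix (p @ [True]) w) \<longleftrightarrow> k < length w \<and> w ! k"
proof
  assume "\<exists>p. length p = k \<and> prefix (p @ [True]) w"
  then obtain p r where "length p = k" "w = p @ [True] @ r" by (auto simp: prefix_def)
  then show "k < length w \<and> w ! k" by (auto simp: nth_append)
next
  assume a: "k < length w \<and> w ! k"
  then have "prefix (take k w @ [True]) w"
    by (metis take_Suc_conv_app_nth take_is_prefix)
  then show "\<exists>p. length p = k \<and> prefix (p @ [True]) w"
    using a by (intro exI[of _ "take k w"]) auto
qed

lemma sat_Bit: "u < c \<Longrightarrow> k < c \<Longrightarrow> sat \<nu> \<sigma> (Bit u k c) \<longleftrightarrow> length (\<nu> k) \<in> tpos (\<nu> u)"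
proof -
  assume "u < c" "k < c"
  then have "sat \<nu> \<sigma> (Bit u k c) \<longleftrightarrow> (\<exists>p. length p = length (\<nu> k) \<and> prefix (p @ [True]) (\<nu> u))"
    by (auto simp: Bit_def tree_le_def eq_level_def S1_def)
  then show ?thesis by (simp add: bit_char tpos_def)
qed

lemma sat_Only: "u < c \<Longrightarrow> a < c \<Longrightarrow> b < c \<Longrightarrow> sat \<nu> \<sigma> (Only u a b c) \<longleftrightarrow> tpos (\<nu> u) \<subseteq> {length (\<nu> a), length (\<nu> b)}"
proof -
  assume "u < c" "a < c" "b < c"
  then have "sat \<nu> \<sigma> (Only u a b c) \<longleftrightarrow> (\<forall>k. (\<exists>p. length p = k \<and> prefix (p @ [True]) (\<nu> u)) \<longrightarrow> k = length (\<nu> a) \<or> k = length (\<nu> b))"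
    by (auto simp: Only_def tree_le_def eq_level_def S1_def)
  then show ?thesis by (auto simp: bit_char tpos_def)
qed

lemma sat_PairN: "u < c \<Longrightarrow> a < c \<Longrightarrow> b < c \<Longrightarrow> sat \<nu> \<sigma> (PairN u a b c) \<longleftrightarrow> tpos (\<nu> u) = {length (\<nu> a), length (\<nu> b)}"
  by (auto simp: PairN_def sat_Bit sat_Only)

lemma sat_Rel: "a < c \<Longrightarrow> b < c \<Longrightarrow> sat \<nu> \<sigma> (Rel a b c) \<longleftrightarrow>
  (\<exists>u. ((length (\<nu> a) \<le> length (\<nu> b) \<and> u \<in> \<sigma> 0) \<or> (length (\<nu> b) < length (\<nu> a) \<and> u \<in> \<sigma> 1)) \<and> tpos u = {length (\<nu> a), length (\<nu> b)})"
  by (simp add: Rel_def sat_Lt sat_PairN) (metis not_le)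

section \<open>Representation of recursive functions\<close>

definition primF :: "nat \<Rightarrow> nat \<Rightarrow> nat \<Rightarrow> form \<Rightarrow> form \<Rightarrow> form" where
  "primF n y b Ff Fg = (let i = b+1; j = b+2; v = b+3; w = b+4; c = b+5 in
    FExN b (FExLevel 0 b (FExLevel 1 b (FAnd
      (FAll i (FImp (FNeg (Lt n i c)) (FExN v (Rel i v c))))
     (FAnd (FAll i (FAll v (FImp (FAnd (IsZ i c) (Rel i v c)) Ff)))
     (FAnd (FAll i (FAll j (FAll v (FAll w (FImp (FAnd (Lt i n c) (FAnd (SucF i j c) (FAnd (Rel i v c) (Rel j w c)))) Fg)))))
      (FAll i (FAll v (FImp (FAnd (FEqLevel i n) (Rel i v c)) (FEqLevel v y))))))))))"

fun rep :: "recf \<Rightarrow> nat list \<Rightarrow> nat \<Rightarrow> nat \<Rightarrow> form"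
and compf :: "recf list \<Rightarrow> nat list \<Rightarrow> nat \<Rightarrow> nat \<Rightarrow> form \<Rightarrow> form" where
  "rep RZ vs y b = IsZ y b"
| "rep RS vs y b = (case vs of [] \<Rightarrow> FFalse | v # _ \<Rightarrow> SucF v y b)"
| "rep (RProj i) vs y b = (if i < length vs then FEqLevel (vs ! i) y else FFalse)"
| "rep (RComp f gs) vs y b = compf gs vs b (b + length gs) (rep f [b..<b + length gs] y (b + length gs))"
| "rep (RPrim f g) vs y b = (case vs of [] \<Rightarrow> FFalse | n # ws \<Rightarrow>
     primF n y b (rep f ws (b+3) (b+5)) (rep g ((b+3) # (b+1) # ws) (b+4) (b+5)))"
| "rep (RMn f) vs y b = FAnd (FExN b (FAnd (IsZ b (Suc b)) (rep f (y # vs) b (Suc b))))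
     (FAll b (FImp (Lt b y (Suc b)) (FExN (Suc b) (FAnd (FNeg (IsZ (Suc b) (b+2))) (rep f (b # vs) (Suc b) (b+2))))))"
| "compf [] vs j b t = t"
| "compf (g # gs) vs j b t = FExN j (FAnd (rep g vs j b) (compf gs vs (Suc j) b t))"

definition relXY :: "bool list set \<Rightarrow> bool list set \<Rightarrow> nat \<Rightarrow> nat \<Rightarrow> bool" where
  "relXY X Y i v \<longleftrightarrow> (\<exists>u. ((i \<le> v \<and> u \<in> X) \<or> (v < i \<and> u \<in> Y)) \<and> tpos u = {i, v})"

definition primC :: "nat \<Rightarrow> nat \<Rightarrow> (nat \<Rightarrow> bool) \<Rightarrow> (nat \<Rightarrow> nat \<Rightarrow> nat \<Rightarrow> bool) \<Rightarrow> (nat \<Rightarrow> nat \<Rightarrow> bool) \<Rightarrow> bool" where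
  "primC N Y0 Pf Pg R \<longleftrightarrow> (\<forall>i\<le>N. \<exists>v. R i v) \<and> (\<forall>v. R 0 v \<longrightarrow> Pf v)
     \<and> (\<forall>i v w. i < N \<and> R i v \<and> R (Suc i) w \<longrightarrow> Pg v i w) \<and> (\<forall>v. R N v \<longrightarrow> v = Y0)"

lemma sat_Rel': "a < c \<Longrightarrow> b < c \<Longrightarrow> sat \<nu> \<sigma> (Rel a b c) \<longleftrightarrow> relXY (\<sigma> 0) (\<sigma> 1) (length (\<nu> a)) (length (\<nu> b))"
  by (simp add: sat_Rel relXY_def)

lemma e: "length (replicate k False) = k" by simp

lemma conv_primC: "(\<exists>(u::bool list) (S::bool list set). S \<subseteq> {w. length w = length u} \<and>
               (\<exists>Sa\<subseteq>{w. length w = length u}.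
                   (\<forall>u::bool list. N < length u \<or>
                        (\<exists>ua::bool list. relXY S Sa (length u) (length ua))) \<and>
                   (\<forall>u::bool list. relXY S Sa 0 (length u) \<longrightarrow> Pf (length u)) \<and>
                   (\<forall>u::bool list. length u < N \<longrightarrow>
                        (\<forall>ua::bool list. length ua \<noteq> Suc (length u)) \<or>
                        (\<forall>ua::bool list. relXY S Sa (length u) (length ua) \<longrightarrow>
                              (\<forall>ub::bool list. relXY S Sa (Suc (length u))
                                     (length ub) \<longrightarrow>
                                    Pg (length ua) (length u)
                                     (length ub)))) \<and>
                   ((\<forall>u::bool list. length u \<noteq> N) \<or>
                    (\<forall>u::bool list. relXY S Sa (N) (length u) \<longrightarrow>
                         length u = Y0)))) \<longleftrightarrow> (\<exists>L X Y. X \<subseteq> {w. length w = L} \<and> Y \<subseteq> {w. length w = L} \<and>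
     primC (N) (Y0) Pf Pg (relXY X Y))" (is "?L \<longleftrightarrow> ?R")
  proof
    assume ?L
    then show ?R
    apply (elim exE conjE)
    subgoal premises h for u S Sa
    proof -
    have "primC (N) (Y0) Pf Pg (relXY S Sa)"
      unfolding primC_def
    proof (intro conjI allI impI)
      fix i assume "i \<le> N"
      then show "\<exists>v. relXY S Sa i v" using h(3)[rule_format, of "replicate i False"] by auto
    next
      fix v assume "relXY S Sa 0 v" then show "Pf v" using h(4)[rule_format, of "replicate v False"] by auto
    next
      fix i v w assume "i < N \<and> relXY S Sa i v \<and> relXY S Sa (Suc i) w"
      then have a: "i < N" "relXY S Sa i v" "relXY S Sa (Suc i) w" by auto
      have "\<not> (\<forall>ua::bool list. length ua \<noteq> Suc i)" using e[of "Suc i"] by blast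
      then have "\<forall>ua::bool list. relXY S Sa i (length ua) \<longrightarrow> (\<forall>ub::bool list. relXY S Sa (Suc i) (length ub) \<longrightarrow>
              Pg (length ua) i (length ub))"
        using h(5)[rule_format, of "replicate i False"] a(1) by auto
      then show "Pg v i w" using a e[of v] e[of w] by metis
    next
      fix v assume "relXY S Sa (N) v" then show "v = Y0"
      proof -
        have "\<not> (\<forall>u::bool list. length u \<noteq> N)" using e[of "N"] by blast
        then show ?thesis using h(6) \<open>relXY S Sa (N) v\<close> e[of v] by metis
      qed
    qed
    then show ?R using h(1,2) by blast
  qed
  done
  next
    assume ?R
    then obtain L S Sa where h: "S \<subseteq> {w. length w = L}" "Sa \<subseteq> {w. length w = L}"
      "primC (N) (Y0) Pf Pg (relXY S Sa)" by blast
    show ?L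
      apply (rule exI[of _ "replicate L False"])
      apply (rule exI[of _ S])
      apply (rule conjI, simp add: h(1))
      apply (rule exI[of _ Sa], rule conjI, simp add: h(2))
    proof (intro conjI)
      from h(3) have p: "\<forall>i\<le>N. \<exists>v. relXY S Sa i v" "\<forall>v. relXY S Sa 0 v \<longrightarrow> Pf v"
         "\<forall>i v w. i < N \<and> relXY S Sa i v \<and> relXY S Sa (Suc i) w \<longrightarrow> Pg v i w"
         "\<forall>v. relXY S Sa N v \<longrightarrow> v = Y0" unfolding primC_def by blast+
      show "\<forall>u::bool list. N < length u \<or> (\<exists>ua::bool list. relXY S Sa (length u) (length ua))"
      proof
        fix u :: "bool list"
        show "N < length u \<or> (\<exists>ua::bool list. relXY S Sa (length u) (length ua))"
        proof (cases "N < length u")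
          case False
          then obtain v where "relXY S Sa (length u) v" using p(1) not_less by blast
          then have "relXY S Sa (length u) (length (replicate v False))" by simp
          then show ?thesis by blast
        qed simp
      qed
      show "\<forall>u::bool list. relXY S Sa 0 (length u) \<longrightarrow> Pf (length u)" using p(2) by blast
      show "\<forall>u::bool list. length u < N \<longrightarrow>
                        (\<forall>ua::bool list. length ua \<noteq> Suc (length u)) \<or>
                        (\<forall>ua::bool list. relXY S Sa (length u) (length ua) \<longrightarrow>
                              (\<forall>ub::bool list. relXY S Sa (Suc (length u))
                                     (length ub) \<longrightarrow>
                                    Pg (length ua) (length u)
                                     (length ub)))" using p(3) by blast
      show "(\<forall>u::bool list. length u \<noteq> N) \<or>
                    (\<forall>u::bool list. relXY S Sa (N) (length u) \<longrightarrow>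
                         length u = Y0)" using p(4) by blast
    qed
  qed


lemma sat_primF:
  assumes "n < b" "y < b"
  and hf: "\<And>\<nu>' \<sigma>'. (\<forall>x<b. \<nu>' x = \<nu> x) \<Longrightarrow> sat \<nu>' \<sigma>' Ff \<longleftrightarrow> Pf (length (\<nu>' (b+3)))"
  and hg: "\<And>\<nu>' \<sigma>'. (\<forall>x<b. \<nu>' x = \<nu> x) \<Longrightarrow> sat \<nu>' \<sigma>' Fg \<longleftrightarrow> Pg (length (\<nu>' (b+3))) (length (\<nu>' (b+1))) (length (\<nu>' (b+4)))"
  shows "sat \<nu> \<sigma> (primF n y b Ff Fg) \<longleftrightarrow> (\<exists>L X Y. X \<subseteq> {w. length w = L} \<and> Y \<subseteq> {w. length w = L} \<and>
     primC (length (\<nu> n)) (length (\<nu> y)) Pf Pg (relXY X Y))"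
proof -
  have "sat \<nu> \<sigma> (primF n y b Ff Fg) \<longleftrightarrow> (\<exists>(u::bool list) (S::bool list set). S \<subseteq> {w. length w = length u} \<and>
               (\<exists>Sa\<subseteq>{w. length w = length u}.
                   (\<forall>u::bool list. length (\<nu> n) < length u \<or>
                        (\<exists>ua::bool list. relXY S Sa (length u) (length ua))) \<and>
                   (\<forall>u::bool list. relXY S Sa 0 (length u) \<longrightarrow> Pf (length u)) \<and>
                   (\<forall>u::bool list. length u < length (\<nu> n) \<longrightarrow>
                        (\<forall>ua::bool list. length ua \<noteq> Suc (length u)) \<or>
                        (\<forall>ua::bool list. relXY S Sa (length u) (length ua) \<longrightarrow>
                              (\<forall>ub::bool list. relXY S Sa (Suc (length u))
                                     (length ub) \<longrightarrow>
                                    Pg (length ua) (length u)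
                                     (length ub)))) \<and>
                   ((\<forall>u::bool list. length u \<noteq> length (\<nu> n)) \<or>
                    (\<forall>u::bool list. relXY S Sa (length (\<nu> n)) (length u) \<longrightarrow>
                         length u = length (\<nu> y)))))" (is "_ \<longleftrightarrow> ?L")
    using assms(1,2)
    by (simp add: primF_def Let_def sat_Lt sat_Rel' sat_IsZ sat_SucF hf hg eq_level_def level_def)
  also have "?L \<longleftrightarrow> (\<exists>L X Y. X \<subseteq> {w. length w = L} \<and> Y \<subseteq> {w. length w = L} \<and>
     primC (length (\<nu> n)) (length (\<nu> y)) Pf Pg (relXY X Y))" by (rule conv_primC)
  finally show ?thesis .
qed

lemma prim_seq: "reval (RPrim f g) (n # xs) y \<Longrightarrow>
   \<exists>s. s n = y \<and> reval f xs (s 0) \<and> (\<forall>i<n. reval g (s i # i # xs) (s (Suc i)))"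
proof (induction n arbitrary: y)
  case 0
  then show ?case by (auto elim: RPrimE intro!: exI[of _ "\<lambda>_. y"])
next
  case (Suc n)
  from Suc.prems obtain y' where a: "reval (RPrim f g) (n # xs) y'" "reval g (y' # n # xs) y"
    by (rule RPrimE) auto
  from Suc.IH[OF a(1)] obtain s where s: "s n = y'" "reval f xs (s 0)" "\<forall>i<n. reval g (s i # i # xs) (s (Suc i))"
    by blast
  show ?case
  proof (intro exI[of _ "s(Suc n := y)"] conjI allI impI)
    fix i assume "i < Suc n"
    then show "reval g ((s(Suc n := y)) i # i # xs) ((s(Suc n := y)) (Suc i))"
      using s a(2) by (cases "i = n") auto
  qed (use s in auto)
qed

definition pn :: "nat \<Rightarrow> nat \<Rightarrow> nat \<Rightarrow> bool list" where
  "pn M i v = map (\<lambda>k. k = i \<or> k = v) [0..<M]"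

lemma tpos_pn: "i < M \<Longrightarrow> v < M \<Longrightarrow> tpos (pn M i v) = {i, v}"
  by (auto simp: tpos_def pn_def)

lemma length_pn[simp]: "length (pn M i v) = M" by (simp add: pn_def)

lemma doubleton_eq: "{a, b} = {c, d} \<Longrightarrow> (a::nat) \<le> b \<Longrightarrow> c \<le> d \<Longrightarrow> a = c \<and> b = d"
  by (metis doubleton_eq_iff le_antisym)

lemma doubleton_eq': "{a, b} = {c, d} \<Longrightarrow> (b::nat) < a \<Longrightarrow> d < c \<Longrightarrow> a = c \<and> b = d"
  by (metis doubleton_eq_iff less_asym)

lemma prim_char:
  "(\<exists>L X Y. X \<subseteq> {w. length w = L} \<and> Y \<subseteq> {w. length w = L} \<and>
     primC N Y0 (\<lambda>v. reval f xs v) (\<lambda>v i w. reval g (v # i # xs) w) (relXY X Y))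
   \<longleftrightarrow> reval (RPrim f g) (N # xs) Y0"
proof
  assume "\<exists>L X Y. X \<subseteq> {w. length w = L} \<and> Y \<subseteq> {w. length w = L} \<and>
     primC N Y0 (\<lambda>v. reval f xs v) (\<lambda>v i w. reval g (v # i # xs) w) (relXY X Y)"
  then obtain X Y where p: "\<forall>i\<le>N. \<exists>v. relXY X Y i v" "\<forall>v. relXY X Y 0 v \<longrightarrow> reval f xs v"
         "\<forall>i v w. i < N \<and> relXY X Y i v \<and> relXY X Y (Suc i) w \<longrightarrow> reval g (v # i # xs) w"
         "\<forall>v. relXY X Y N v \<longrightarrow> v = Y0" unfolding primC_def by blast
  have ind: "\<forall>v. relXY X Y i v \<longrightarrow> reval (RPrim f g) (i # xs) v" if "i \<le> N" for i
    using that
  proof (induction i)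
    case 0 then show ?case using p(2) reval.prim0 by blast
  next
    case (Suc i)
    show ?case
    proof (intro allI impI)
      fix v assume r: "relXY X Y (Suc i) v"
      obtain v' where r': "relXY X Y i v'" using p(1) Suc.prems by (meson Suc_leD)
      have "reval (RPrim f g) (i # xs) v'" using Suc r' by simp
      moreover have "reval g (v' # i # xs) v" using p(3) r r' Suc.prems by simp
      ultimately show "reval (RPrim f g) (Suc i # xs) v" by (rule reval.primS)
    qed
  qed
  obtain v where "relXY X Y N v" using p(1) by blast
  then show "reval (RPrim f g) (N # xs) Y0" using ind[of N] p(4) by auto
next
  assume "reval (RPrim f g) (N # xs) Y0"
  from prim_seq[OF this] obtain s where s: "s N = Y0" "reval f xs (s 0)" "\<forall>i<N. reval g (s i # i # xs) (s (Suc i))"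
    by blast
  define M where "M = Suc (max N (Max (s ` {..N})))"
  have sM: "s i < M" if "i \<le> N" for i
  proof -
    have "s i \<le> Max (s ` {..N})" using that by (intro Max_ge) auto
    then show ?thesis unfolding M_def by linarith
  qed
  have iM: "i < M" if "i \<le> N" for i using that unfolding M_def by linarith
  define X where "X = (\<lambda>i. pn M i (s i)) ` {i. i \<le> N \<and> i \<le> s i}"
  define Y where "Y = (\<lambda>i. pn M i (s i)) ` {i. i \<le> N \<and> s i < i}"
  have R: "relXY X Y i v \<longleftrightarrow> i \<le> N \<and> v = s i" for i v
  proof
    assume "relXY X Y i v"
    then obtain u where u: "(i \<le> v \<and> u \<in> X) \<or> (v < i \<and> u \<in> Y)" "tpos u = {i, v}"
      unfolding relXY_def by blast
    from u(1) show "i \<le> N \<and> v = s i"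
    proof
      assume a: "i \<le> v \<and> u \<in> X"
      then obtain i' where i': "i' \<le> N" "i' \<le> s i'" "u = pn M i' (s i')" unfolding X_def by blast
      then have "{i', s i'} = {i, v}" using u(2) tpos_pn iM sM by simp
      then show ?thesis using doubleton_eq[of i' "s i'" i v] a i' by auto
    next
      assume a: "v < i \<and> u \<in> Y"
      then obtain i' where i': "i' \<le> N" "s i' < i'" "u = pn M i' (s i')" unfolding Y_def by blast
      then have "{i', s i'} = {i, v}" using u(2) tpos_pn iM sM by simp
      then show ?thesis using doubleton_eq'[of i' "s i'" i v] a i' by auto
    qed
  next
    assume a: "i \<le> N \<and> v = s i"
    show "relXY X Y i v"
    proof (cases "i \<le> s i")
      case True
      then have "pn M i (s i) \<in> X" using a unfolding X_def by blast
      then show ?thesis unfolding relXY_def using a True tpos_pn iM sM by blast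
    next
      case False
      then have "pn M i (s i) \<in> Y" using a unfolding Y_def by auto
      then show ?thesis unfolding relXY_def using a False tpos_pn iM sM by (metis not_le)
    qed
  qed
  have "X \<subseteq> {w. length w = M}" "Y \<subseteq> {w. length w = M}" unfolding X_def Y_def by auto
  moreover have "primC N Y0 (\<lambda>v. reval f xs v) (\<lambda>v i w. reval g (v # i # xs) w) (relXY X Y)"
    unfolding primC_def R using s by auto
  ultimately show "\<exists>L X Y. X \<subseteq> {w. length w = L} \<and> Y \<subseteq> {w. length w = L} \<and>
     primC N Y0 (\<lambda>v. reval f xs v) (\<lambda>v i w. reval g (v # i # xs) w) (relXY X Y)" by blast
qed

fun upds :: "(nat \<Rightarrow> node) \<Rightarrow> nat \<Rightarrow> node list \<Rightarrow> (nat \<Rightarrow> node)" where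
  "upds \<nu> j [] = \<nu>"
| "upds \<nu> j (u # us) = upds (\<nu>(j := u)) (Suc j) us"

lemma upds_lt: "x < j \<Longrightarrow> upds \<nu> j us x = \<nu> x"
  by (induction us arbitrary: \<nu> j) auto

lemma upds_range: "k < length us \<Longrightarrow> upds \<nu> j us (j + k) = us ! k"
proof (induction us arbitrary: \<nu> j k)
  case Nil then show ?case by simp
next
  case (Cons u us)
  show ?case
  proof (cases k)
    case 0 then show ?thesis by (simp add: upds_lt)
  next
    case (Suc k')
    have "upds (\<nu>(j:=u)) (Suc j) us (Suc j + k') = us ! k'"
      by (rule Cons.IH) (use Cons.prems Suc in simp)
    then show ?thesis using Suc by simp
  qed
qed

lemma upds_map: "map (upds \<nu> j us) [j..<j + length us] = us"
  by (rule nth_equalityI) (auto simp: upds_range)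

lemma lens_upd: "\<forall>v\<in>set vs. v < (j::nat) \<Longrightarrow> map (\<lambda>v. length ((\<nu>(j := u)) v)) vs = map (\<lambda>v. length (\<nu> v)) vs"
proof (rule map_cong[OF refl])
  fix v assume "\<forall>v\<in>set vs. v < j" "v \<in> set vs"
  then have "v < j" by blast
  then have "v \<noteq> j" by simp
  then show "length ((\<nu>(j := u)) v) = length (\<nu> v)" by simp
qed

lemma sat_compf:
  assumes IH: "\<forall>g\<in>set gs. \<forall>vs y b \<nu> \<sigma>. (\<forall>v\<in>set vs. v < b) \<longrightarrow> y < b \<longrightarrow>
          (sat \<nu> \<sigma> (rep g vs y b) \<longleftrightarrow> reval g (map (\<lambda>v. length (\<nu> v)) vs) (length (\<nu> y)))"
    and "\<forall>v\<in>set vs. v < j" and "j + length gs \<le> b"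
  shows "sat \<nu> \<sigma> (compf gs vs j b t) \<longleftrightarrow> (\<exists>us. length us = length gs \<and>
     list_all2 (\<lambda>g u. reval g (map (\<lambda>v. length (\<nu> v)) vs) (length u)) gs us \<and> sat (upds \<nu> j us) \<sigma> t)"
  using assms
proof (induction gs arbitrary: j \<nu>)
  case Nil then show ?case by simp
next
  case (Cons g gs)
  have vj: "\<forall>v\<in>set vs. v < Suc j" using Cons.prems(2) by auto
  from Cons.prems(1) have IHg: "\<forall>vs y b \<nu> \<sigma>. (\<forall>v\<in>set vs. v < b) \<longrightarrow> y < b \<longrightarrow>
          (sat \<nu> \<sigma> (rep g vs y b) \<longleftrightarrow> reval g (map (\<lambda>v. length (\<nu> v)) vs) (length (\<nu> y)))" by simp
  have vb: "\<forall>v\<in>set vs. v < b" "j < b" using Cons.prems(2,3) by auto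
  have 1: "sat (\<nu>(j := u)) \<sigma> (rep g vs j b) \<longleftrightarrow> reval g (map (\<lambda>v. length (\<nu> v)) vs) (length u)" for u
  proof -
    have "sat (\<nu>(j:=u)) \<sigma> (rep g vs j b) \<longleftrightarrow> reval g (map (\<lambda>v. length ((\<nu>(j:=u)) v)) vs) (length ((\<nu>(j:=u)) j))"
      by (rule IHg[rule_format]) (use vb in auto)
    then show ?thesis unfolding lens_upd[OF Cons.prems(2)] fun_upd_same .
  qed
  have 2: "sat (\<nu>(j := u)) \<sigma> (compf gs vs (Suc j) b t) \<longleftrightarrow> (\<exists>us. length us = length gs \<and>
     list_all2 (\<lambda>g u. reval g (map (\<lambda>v. length (\<nu> v)) vs) (length u)) gs us \<and> sat (upds (\<nu>(j := u)) (Suc j) us) \<sigma> t)" for u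
  proof -
    have "sat (\<nu>(j:=u)) \<sigma> (compf gs vs (Suc j) b t) \<longleftrightarrow> (\<exists>us. length us = length gs \<and>
     list_all2 (\<lambda>g u'. reval g (map (\<lambda>v. length ((\<nu>(j:=u)) v)) vs) (length u')) gs us \<and> sat (upds (\<nu>(j:=u)) (Suc j) us) \<sigma> t)"
      by (rule Cons.IH) (use Cons.prems vj in auto)
    then show ?thesis unfolding lens_upd[OF Cons.prems(2)] .
  qed
  show ?case
    apply (simp add: 1 2)
    apply (rule iffI)
     apply (elim exE conjE)
    subgoal for u us by (rule exI[of _ "u # us"]) auto
    apply (elim exE conjE)
    subgoal for us by (cases us) auto
    done
qed

lemma reval_RComp_iff: "reval (RComp f gs) xs z \<longleftrightarrow> (\<exists>ys. list_all2 (\<lambda>g y. reval g xs y) gs ys \<and> reval f ys z)"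
  by (auto elim: RCompE intro: reval.comp)

lemma sat_rep: "(\<forall>v\<in>set vs. v < b) \<Longrightarrow> y < b \<Longrightarrow>
  sat \<nu> \<sigma> (rep f vs y b) \<longleftrightarrow> reval f (map (\<lambda>v. length (\<nu> v)) vs) (length (\<nu> y))"
proof (induction f arbitrary: vs y b \<nu> \<sigma>)
  case RZ
  then show ?case by (auto simp: sat_IsZ elim: RZE intro: reval.zero)
next
  case RS
  then show ?case
    by (cases vs) (auto simp: sat_SucF elim: RSE intro: reval.succ)
next
  case (RProj i)
  then show ?case
  proof (cases "i < length vs")
    case True
    have "reval (RProj i) (map (\<lambda>v. length (\<nu> v)) vs) (length (\<nu> (vs ! i)))"
      using reval.proj[of i "map (\<lambda>v. length (\<nu> v)) vs"] True by simp
    then show ?thesis using True by (auto simp: eq_level_def elim: RProjE)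
  next
    case False then show ?thesis by (auto elim: RProjE)
  qed
next
  case (RComp f gs)
  let ?k = "length gs"
  let ?xs = "map (\<lambda>v. length (\<nu> v)) vs"
  have IHg: "\<forall>g\<in>set gs. \<forall>vs y b \<nu> \<sigma>. (\<forall>v\<in>set vs. v < b) \<longrightarrow> y < b \<longrightarrow>
          (sat \<nu> \<sigma> (rep g vs y b) \<longleftrightarrow> reval g (map (\<lambda>v. length (\<nu> v)) vs) (length (\<nu> y)))"
    by (intro ballI allI impI, rule RComp.IH(2)) auto
  have t: "sat (upds \<nu> b us) \<sigma> (rep f [b..<b + ?k] y (b + ?k)) \<longleftrightarrow> reval f (map length us) (length (\<nu> y))"
    if "length us = ?k" for us
  proof -
    have "sat (upds \<nu> b us) \<sigma> (rep f [b..<b + ?k] y (b + ?k)) \<longleftrightarrow>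
      reval f (map (\<lambda>v. length (upds \<nu> b us v)) [b..<b + ?k]) (length (upds \<nu> b us y))"
      by (rule RComp.IH(1)) (use RComp.prems in auto)
    also have "map (\<lambda>v. length (upds \<nu> b us v)) [b..<b + ?k] = map length us"
    proof -
      have "map (upds \<nu> b us) [b..<b + ?k] = us" using upds_map[of \<nu> b us] that by simp
      then have "map length (map (upds \<nu> b us) [b..<b + ?k]) = map length us" by simp
      then show ?thesis by (simp add: comp_def)
    qed
    finally show ?thesis using upds_lt[of y b \<nu> us] RComp.prems by simp
  qed
  have "sat \<nu> \<sigma> (rep (RComp f gs) vs y b) \<longleftrightarrow> (\<exists>us::node list. length us = ?k \<and>
     list_all2 (\<lambda>g u. reval g ?xs (length u)) gs us \<and> sat (upds \<nu> b us) \<sigma> (rep f [b..<b + ?k] y (b + ?k)))"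
    unfolding rep.simps by (rule sat_compf[OF IHg]) (use RComp.prems in auto)
  also have "\<dots> \<longleftrightarrow> (\<exists>us::node list. length us = ?k \<and>
     list_all2 (\<lambda>g u. reval g ?xs (length u)) gs us \<and> reval f (map length us) (length (\<nu> y)))"
    using t by blast
  also have "\<dots> \<longleftrightarrow> reval (RComp f gs) ?xs (length (\<nu> y))"
    unfolding reval_RComp_iff
  proof
    assume "\<exists>us::node list. length us = ?k \<and>
     list_all2 (\<lambda>g u. reval g ?xs (length u)) gs us \<and> reval f (map length us) (length (\<nu> y))"
    then obtain us :: "node list" where "list_all2 (\<lambda>g u. reval g ?xs (length u)) gs us" "reval f (map length us) (length (\<nu> y))"
      by blast
    then show "\<exists>ys. list_all2 (\<lambda>g y. reval g ?xs y) gs ys \<and> reval f ys (length (\<nu> y))"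
      by (intro exI[of _ "map length us"]) (simp add: list_all2_map2)
  next
    assume "\<exists>ys. list_all2 (\<lambda>g y. reval g ?xs y) gs ys \<and> reval f ys (length (\<nu> y))"
    then obtain ys where ys: "list_all2 (\<lambda>g y. reval g ?xs y) gs ys" "reval f ys (length (\<nu> y))" by blast
    let ?us = "map (\<lambda>n. replicate n False) ys"
    have m: "map length ?us = ys" by (simp add: map_idI)
    have "length ?us = ?k" using ys(1) by (simp add: list_all2_lengthD)
    moreover have "list_all2 (\<lambda>g u. reval g ?xs (length u)) gs ?us"
      using ys(1) by (simp add: list_all2_map2)
    moreover have "reval f (map length ?us) (length (\<nu> y))" using m ys(2) by simp
    ultimately show "\<exists>us::node list. length us = ?k \<and>
     list_all2 (\<lambda>g u. reval g ?xs (length u)) gs us \<and> reval f (map length us) (length (\<nu> y))"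
      by blast
  qed
  finally show ?case .
next
  case (RPrim f g)
  show ?case
  proof (cases vs)
    case Nil
    then show ?thesis by (auto elim: RPrimE)
  next
    case (Cons n ws)
    let ?ws = "map (\<lambda>v. length (\<nu> v)) ws"
    have nb: "n < b" "\<forall>v\<in>set ws. v < b" using RPrim.prems Cons by auto
    have lw: "map (\<lambda>v. length (\<nu>' v)) ws = ?ws" if "\<forall>x<b. \<nu>' x = \<nu> x" for \<nu>'
      using that nb(2) by auto
    have hf: "sat \<nu>' \<sigma>' (rep f ws (b+3) (b+5)) \<longleftrightarrow> reval f ?ws (length (\<nu>' (b+3)))"
      if "\<forall>x<b. \<nu>' x = \<nu> x" for \<nu>' \<sigma>'
    proof -
      have "sat \<nu>' \<sigma>' (rep f ws (b+3) (b+5)) \<longleftrightarrow> reval f (map (\<lambda>v. length (\<nu>' v)) ws) (length (\<nu>' (b+3)))"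
        by (rule RPrim.IH(1)) (use nb in auto)
      then show ?thesis using lw[OF that] by simp
    qed
    have hg: "sat \<nu>' \<sigma>' (rep g ((b+3) # (b+1) # ws) (b+4) (b+5)) \<longleftrightarrow>
        reval g (length (\<nu>' (b+3)) # length (\<nu>' (b+1)) # ?ws) (length (\<nu>' (b+4)))"
      if "\<forall>x<b. \<nu>' x = \<nu> x" for \<nu>' \<sigma>'
    proof -
      have "sat \<nu>' \<sigma>' (rep g ((b+3) # (b+1) # ws) (b+4) (b+5)) \<longleftrightarrow>
         reval g (map (\<lambda>v. length (\<nu>' v)) ((b+3) # (b+1) # ws)) (length (\<nu>' (b+4)))"
        by (rule RPrim.IH(2)) (use nb in auto)
      then show ?thesis using lw[OF that] by simp
    qed
    have "sat \<nu> \<sigma> (rep (RPrim f g) vs y b) \<longleftrightarrow> (\<exists>L X Y. X \<subseteq> {w. length w = L} \<and> Y \<subseteq> {w. length w = L} \<and>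
     primC (length (\<nu> n)) (length (\<nu> y)) (\<lambda>v. reval f ?ws v) (\<lambda>v i w. reval g (v # i # ?ws) w) (relXY X Y))"
      unfolding Cons rep.simps list.case
      by (rule sat_primF[where Pf = "\<lambda>v. reval f ?ws v" and Pg = "\<lambda>v i w. reval g (v # i # ?ws) w"])
        (use nb RPrim.prems hf hg in auto)
    also have "\<dots> \<longleftrightarrow> reval (RPrim f g) (length (\<nu> n) # ?ws) (length (\<nu> y))"
      by (rule prim_char)
    finally show ?thesis using Cons by simp
  qed
next
  case (RMn f)
  let ?xs = "map (\<lambda>v. length (\<nu> v)) vs"
  have vb: "\<forall>v\<in>set vs. v < b" "y < b" using RMn.prems by auto
  have lw: "map (\<lambda>v. length (\<nu>' v)) vs = ?xs" if "\<forall>x<b. \<nu>' x = \<nu> x" for \<nu>'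
    using that vb(1) by auto
  have A: "sat (\<nu>(b := u)) \<sigma> (FAnd (IsZ b (Suc b)) (rep f (y # vs) b (Suc b))) \<longleftrightarrow>
     length u = 0 \<and> reval f (length (\<nu> y) # ?xs) (length u)" for u
  proof -
    have "sat (\<nu>(b := u)) \<sigma> (rep f (y # vs) b (Suc b)) \<longleftrightarrow>
       reval f (map (\<lambda>v. length ((\<nu>(b := u)) v)) (y # vs)) (length ((\<nu>(b := u)) b))"
      by (rule RMn.IH) (use vb in auto)
    moreover have "map (\<lambda>v. length ((\<nu>(b := u)) v)) (y # vs) = length (\<nu> y) # ?xs"
      using lw[of "\<nu>(b := u)"] vb(2) by simp
    ultimately have "sat (\<nu>(b := u)) \<sigma> (rep f (y # vs) b (Suc b)) \<longleftrightarrow> reval f (length (\<nu> y) # ?xs) (length u)"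
      by (simp only: fun_upd_same)
    then show ?thesis by (auto simp: sat_IsZ fun_upd_same simp del: fun_upd_apply)
  qed
  have B: "sat (\<nu>(b := u, Suc b := u')) \<sigma> (FAnd (FNeg (IsZ (Suc b) (b+2))) (rep f (b # vs) (Suc b) (b+2))) \<longleftrightarrow>
     length u' \<noteq> 0 \<and> reval f (length u # ?xs) (length u')" for u u'
  proof -
    have "sat (\<nu>(b := u, Suc b := u')) \<sigma> (rep f (b # vs) (Suc b) (b+2)) \<longleftrightarrow>
       reval f (map (\<lambda>v. length ((\<nu>(b := u, Suc b := u')) v)) (b # vs)) (length ((\<nu>(b := u, Suc b := u')) (Suc b)))"
      by (rule RMn.IH) (use vb in auto)
    moreover have "map (\<lambda>v. length ((\<nu>(b := u, Suc b := u')) v)) (b # vs) = length u # ?xs"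
      using lw[of "\<nu>(b := u, Suc b := u')"] by simp
    ultimately have "sat (\<nu>(b := u, Suc b := u')) \<sigma> (rep f (b # vs) (Suc b) (b+2)) \<longleftrightarrow> reval f (length u # ?xs) (length u')"
      by (simp only: fun_upd_same)
    then show ?thesis by (auto simp: sat_IsZ fun_upd_same simp del: fun_upd_apply)
  qed
  have C: "sat (\<nu>(b := u)) \<sigma> (Lt b y (Suc b)) \<longleftrightarrow> length u < length (\<nu> y)" for u
    using vb(2) by (simp add: sat_Lt)
  have "sat \<nu> \<sigma> (rep (RMn f) vs y b) \<longleftrightarrow>
    (\<exists>u. sat (\<nu>(b := u)) \<sigma> (FAnd (IsZ b (Suc b)) (rep f (y # vs) b (Suc b)))) \<and>
    (\<forall>u. sat (\<nu>(b := u)) \<sigma> (Lt b y (Suc b)) \<longrightarrow> (\<exists>u'. sat (\<nu>(b := u, Suc b := u')) \<sigma>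
         (FAnd (FNeg (IsZ (Suc b) (b+2))) (rep f (b # vs) (Suc b) (b+2)))))"
    by simp
  also have "\<dots> \<longleftrightarrow>
    (\<exists>u::node. length u = 0 \<and> reval f (length (\<nu> y) # ?xs) (length u)) \<and>
    (\<forall>u::node. length u < length (\<nu> y) \<longrightarrow> (\<exists>u'::node. length u' \<noteq> 0 \<and> reval f (length u # ?xs) (length u')))"
    by (simp only: A B C)
  also have "\<dots> \<longleftrightarrow> reval f (length (\<nu> y) # ?xs) 0 \<and> (\<forall>m<length (\<nu> y). \<exists>k. k \<noteq> 0 \<and> reval f (m # ?xs) k)"
  proof -
    have "(\<exists>u::node. length u = 0 \<and> reval f (length (\<nu> y) # ?xs) (length u)) \<longleftrightarrow> reval f (length (\<nu> y) # ?xs) 0"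
      by (metis length_0_conv list.size(3))
    moreover have "(\<forall>u::node. length u < length (\<nu> y) \<longrightarrow> (\<exists>u'::node. length u' \<noteq> 0 \<and> reval f (length u # ?xs) (length u')))
       \<longleftrightarrow> (\<forall>m<length (\<nu> y). \<exists>k. k \<noteq> 0 \<and> reval f (m # ?xs) k)"
    proof
      assume h: "\<forall>u::node. length u < length (\<nu> y) \<longrightarrow> (\<exists>u'::node. length u' \<noteq> 0 \<and> reval f (length u # ?xs) (length u'))"
      show "\<forall>m<length (\<nu> y). \<exists>k. k \<noteq> 0 \<and> reval f (m # ?xs) k"
      proof (intro allI impI)
        fix m assume "m < length (\<nu> y)"
        then show "\<exists>k. k \<noteq> 0 \<and> reval f (m # ?xs) k"
          using h[rule_format, of "replicate m False"] by auto
      qed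
    next
      assume h: "\<forall>m<length (\<nu> y). \<exists>k. k \<noteq> 0 \<and> reval f (m # ?xs) k"
      show "\<forall>u::node. length u < length (\<nu> y) \<longrightarrow> (\<exists>u'::node. length u' \<noteq> 0 \<and> reval f (length u # ?xs) (length u'))"
      proof (intro allI impI)
        fix u :: node assume "length u < length (\<nu> y)"
        then obtain k where "k \<noteq> 0" "reval f (length u # ?xs) k" using h by blast
        then show "\<exists>u'::node. length u' \<noteq> 0 \<and> reval f (length u # ?xs) (length u')"
          by (intro exI[of _ "replicate k False"]) simp
      qed
    qed
    ultimately show ?thesis by simp
  qed
  also have "\<dots> \<longleftrightarrow> reval (RMn f) ?xs (length (\<nu> y))"
    by (auto elim: RMnE intro: reval.mn)
  finally show ?case .
qed

section \<open>Free variables\<close>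

lemma fvN_IsZ: "fvN (IsZ a c) \<subseteq> {a}" by (auto simp: IsZ_def)
lemma fvN_SucF: "fvN (SucF a y c) \<subseteq> {a, y}" by (auto simp: SucF_def)
lemma fvN_Lt: "fvN (Lt a b c) \<subseteq> {a, b}" by (auto simp: Lt_def)
lemma fvN_Bit: "fvN (Bit u k c) \<subseteq> {u, k}" by (auto simp: Bit_def)
lemma fvN_Only: "fvN (Only u a b c) \<subseteq> {u, a, b}" by (auto simp: Only_def)
lemma fvN_PairN: "fvN (PairN u a b c) \<subseteq> {u, a, b}"
  using fvN_Bit[of u a c] fvN_Bit[of u b c] fvN_Only[of u a b c] by (auto simp: PairN_def)
lemma fvN_Rel: "fvN (Rel a b c) \<subseteq> {a, b}"
  using fvN_Lt[of b a "Suc c"] fvN_PairN[of c a b "Suc c"] by (auto simp: Rel_def)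

lemma fvS_IsZ: "fvS (IsZ a c) = {}" by (simp add: IsZ_def)
lemma fvS_SucF: "fvS (SucF a y c) = {}" by (simp add: SucF_def)
lemma fvS_Lt: "fvS (Lt a b c) = {}" by (simp add: Lt_def)
lemma fvS_PairN: "fvS (PairN u a b c) = {}" by (simp add: PairN_def Bit_def Only_def)
lemma fvS_Rel: "fvS (Rel a b c) \<subseteq> {0, 1}" by (auto simp: Rel_def fvS_Lt fvS_PairN)

lemma fvN_primF:
  assumes "fvN Ff \<subseteq> insert (b+3) W" "fvN Fg \<subseteq> {b+1, b+3, b+4} \<union> W"
  shows "fvN (primF n y b Ff Fg) \<subseteq> {n, y} \<union> W"
  using assms fvN_Lt[of n "b+1" "b+5"] fvN_Lt[of "b+1" n "b+5"] fvN_Rel[of "b+1" "b+3" "b+5"]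
    fvN_Rel[of "b+2" "b+4" "b+5"] fvN_IsZ[of "b+1" "b+5"] fvN_SucF[of "b+1" "b+2" "b+5"]
  unfolding primF_def Let_def by (simp; blast)

lemma fvS_primF:
  assumes "fvS Ff = {}" "fvS Fg = {}"
  shows "fvS (primF n y b Ff Fg) = {}"
  using assms fvS_Rel[of "b+1" "b+3" "b+5"] fvS_Rel[of "b+2" "b+4" "b+5"]
  unfolding primF_def Let_def by (auto simp: fvS_Lt fvS_IsZ fvS_SucF)

lemma fv_rep:
  "fvN (rep f vs y b) \<subseteq> insert y (set vs) \<and> fvS (rep f vs y b) = {}"
  "fvN (compf gs vs j b t) \<subseteq> set vs \<union> (fvN t - {j..<j + length gs}) \<and> (fvS (compf gs vs j b t) = fvS t)"
proof (induction f vs y b and gs vs j b t rule: rep_compf.induct)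
  case (1 vs y b) then show ?case using fvN_IsZ[of y b] by (auto simp: fvS_IsZ)
next
  case (2 vs y b) then show ?case using fvN_SucF by (auto simp: fvS_SucF split: list.split)
next
  case (3 i vs y b) then show ?case by auto
next
  case (4 f gs vs y b)
  then show ?case by auto
next
  case (5 f g vs y b)
  show ?case
  proof (cases vs)
    case Nil then show ?thesis by simp
  next
    case (Cons n ws)
    have "fvN (rep (RPrim f g) vs y b) \<subseteq> {n, y} \<union> set ws"
      unfolding Cons rep.simps list.case by (rule fvN_primF) (use 5 Cons in auto)
    moreover have "fvS (rep (RPrim f g) vs y b) = {}"
      using Cons 5 by (auto intro!: fvS_primF)
    ultimately show ?thesis using Cons by auto
  qed
next
  case (6 f vs y b)
  then show ?case using fvN_IsZ[of b "Suc b"] fvN_IsZ[of "Suc b" "b+2"] fvN_Lt[of b y "Suc b"]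
    by (auto simp: fvS_IsZ fvS_Lt)
next
  case (7 vs j b t) then show ?case by simp
next
  case (8 g gs vs j b t) then show ?case by auto
qed

lemma fv_Nm: "fvN (Nm n) \<subseteq> {0} \<and> fvS (Nm n) = {}"
  by (induction n) auto

theorem mainTheorem3:
  shows "\<not> decidable_set (code ` chain_theory)"
proof
  assume "decidable_set (code ` chain_theory)"
  then obtain F where F: "\<And>n. reval F [n] (if n \<in> code ` chain_theory then 1 else 0)"
    unfolding decidable_set_def by blast
  define \<psi> where "\<psi> = FExN 1 (FAnd (rep rdiag [0] 1 3) (FExN 2 (FAnd (IsZ 2 3) (rep F [1] 2 3))))"
  define \<delta> where "\<delta> = dg \<psi>"
  have sem_\<psi>: "sat \<nu> \<sigma> \<psi> \<longleftrightarrow> (\<exists>d. reval rdiag [length (\<nu> 0)] d \<and> reval F [d] 0)" for \<nu> \<sigma>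
  proof -
    have 1: "sat (\<nu>(1:=u)) \<sigma> (rep rdiag [0] 1 3) \<longleftrightarrow> reval rdiag [length (\<nu> 0)] (length u)" for u
      using sat_rep[of "[0]" 3 1 "\<nu>(1:=u)" \<sigma> rdiag] by simp
    have 2: "sat (\<nu>(1:=u, 2:=w)) \<sigma> (FAnd (IsZ 2 3) (rep F [1] 2 3)) \<longleftrightarrow> w = [] \<and> reval F [length u] 0" for u w
      using sat_rep[of "[1]" 3 2 "\<nu>(1:=u,2:=w)" \<sigma> F] by (auto simp: sat_IsZ)
    have "sat \<nu> \<sigma> \<psi> \<longleftrightarrow> (\<exists>u. sat (\<nu>(1:=u)) \<sigma> (rep rdiag [0] 1 3) \<and>
        (\<exists>w. sat (\<nu>(1:=u, 2:=w)) \<sigma> (FAnd (IsZ 2 3) (rep F [1] 2 3))))"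
      unfolding \<psi>_def by simp
    also have "\<dots> \<longleftrightarrow> (\<exists>u::node. reval rdiag [length (\<nu> 0)] (length u) \<and> reval F [length u] 0)"
      by (simp only: 1 2) blast
    also have "\<dots> \<longleftrightarrow> (\<exists>d. reval rdiag [length (\<nu> 0)] d \<and> reval F [d] 0)"
      by (metis length_replicate)
    finally show ?thesis .
  qed
  have sem_\<delta>: "sat \<nu> \<sigma> \<delta> \<longleftrightarrow> reval F [code \<delta>] 0" for \<nu> \<sigma>
  proof -
    have "sat \<nu> \<sigma> \<delta> \<longleftrightarrow> (\<exists>u. sat (\<nu>(0:=u)) \<sigma> (Nm (code \<psi>)) \<and> sat (\<nu>(0:=u)) \<sigma> \<psi>)"
      unfolding \<delta>_def dg_def by simp
    also have "\<dots> \<longleftrightarrow> (\<exists>u::node. length u = code \<psi> \<and> (\<exists>d. reval rdiag [length u] d \<and> reval F [d] 0))"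
      by (simp only: sat_Nm sem_\<psi> fun_upd_same)
    also have "\<dots> \<longleftrightarrow> (\<exists>d. reval rdiag [code \<psi>] d \<and> reval F [d] 0)"
      by (metis length_replicate)
    also have "\<dots> \<longleftrightarrow> reval F [code \<delta>] 0"
      using reval_rdiag[of \<psi>] reval_det[of rdiag "[code \<psi>]"] unfolding \<delta>_def by blast
    finally show ?thesis .
  qed
  have "fvN \<psi> \<subseteq> {0}"
    using fv_rep(1)[of rdiag "[0]" 1 3] fv_rep(1)[of F "[1]" 2 3] fvN_IsZ[of 2 3]
    unfolding \<psi>_def by auto
  moreover have "fvS \<psi> = {}"
    using fv_rep(1)[of rdiag "[0]" 1 3] fv_rep(1)[of F "[1]" 2 3]
    unfolding \<psi>_def by (auto simp: fvS_IsZ)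
  ultimately have sent: "sentence \<delta>"
    using fv_Nm[of "code \<psi>"] unfolding sentence_def \<delta>_def dg_def by auto
  show False
  proof (cases "reval F [code \<delta>] 0")
    case True
    then have "\<delta> \<in> chain_theory" using sent sem_\<delta> unfolding chain_theory_def by blast
    then have "reval F [code \<delta>] 1" using F[of "code \<delta>"] by simp
    then show False using True reval_det by fastforce
  next
    case False
    then have "code \<delta> \<in> code ` chain_theory" using F[of "code \<delta>"] by (cases "code \<delta> \<in> code ` chain_theory") auto
    then obtain \<phi> where "\<phi> \<in> chain_theory" "code \<phi> = code \<delta>" by (metis imageE)
    then have "\<delta> \<in> chain_theory" using code_inj by metis
    then have "sat (\<lambda>_. []) (\<lambda>_. {}) \<delta>" unfolding chain_theory_def by blast
    then show False using False sem_\<delta> by blast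
  qed
qed

end
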